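(* Let $\mathcal{Y}_c,\mathcal{Y}$ be output alphabets with $\{0,1,\dots,\alpha\}\subseteq\mathcal{Y}_c\subseteq\mathcal{Y}\subseteq\mathbb{Z}$. Then there exists a function $F_n:\mathcal{Y}^n\to\mathcal{Y}_c^n$ (not depending on $s_0$ or $\mathbf{x}$) such that for every $(s_0,\mathbf{x})\in\mathcal{S}\times\mathcal{X}^n$ and every $\mathbf{y}\in\mathcal{Y}^n(s_0,\mathbf{x})$ we have $F_n(\mathbf{y})\in\mathcal{Y}_c^n(s_0,\mathbf{x})$.
   Context: Fix integers $\alpha\ge 1$ (maximal consumption per step), $\beta\ge 0$ (battery capacity), and $n\ge 1$. Let $\mathcal{X}=\{0,1,\dots,\alpha\}$ and $\mathcal{S}=\{0,1,\dots,\beta\}$. For an initial battery state $s_0\in\mathcal{S}$, a consumption sequence $\mathbf{x}=(x_0,\dots,x_{n-1})\in\mathcal{X}^n$ and a request sequence $\mathbf{y}=(y_0,\dots,y_{n-1})\in\mathbb{Z}^n$, the battery states are $s_i=s_0+\sum_{k=0}^{i-1}y_k-\sum_{k=0}^{i-1}x_k$ for $i=0,1,\dots,n$. For an output alphabet $\mathcal{Y}\subseteq\mathbb{Z}$, the set of feasible requests is $\mathcal{Y}^n(s_0,\mathbf{x})=\{\mathbf{y}\in\mathcal{Y}^n: s_i\in\{0,\dots,\beta\}\text{ for all } i=0,\dots,n\}$. *)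

theory Defs
  imports Main
begin

definition battery_state :: "int \<Rightarrow> int list \<Rightarrow> int list \<Rightarrow> nat \<Rightarrow> int" where
  "battery_state s0 xs ys i = s0 + sum_list (take i ys) - sum_list (take i xs)"

definition feasible_requests :: "int \<Rightarrow> int set \<Rightarrow> nat \<Rightarrow> int \<Rightarrow> int list \<Rightarrow> int list set" where
  "feasible_requests \<beta> Y n s0 xs =
     {ys. length ys = n \<and> set ys \<subseteq> Y \<and>
          (\<forall>i\<le>n. 0 \<le> battery_state s0 xs ys i \<and> battery_state s0 xs ys i \<le> \<beta>)}"

end

theory Submission
  imports Defs
begin

fun g :: "int \<Rightarrow> int \<Rightarrow> int \<Rightarrow> int list \<Rightarrow> int list" where
  "g a c d [] = []"
| "g a c d (y#ys) = (let d' = d + y; c' = max c (min (c + a) d') in (c' - c) # g a c' d' ys)"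

lemma g_len: "length (g a c d ys) = length ys"
  by (induction ys arbitrary: c d) (auto simp: Let_def)

lemma g_set: "a \<ge> 0 \<Longrightarrow> set (g a c d ys) \<subseteq> {0..a}"
  by (induction ys arbitrary: c d) (auto simp: Let_def)

lemma g_main:
  assumes "length xs = length ys" "set xs \<subseteq> {0..a}"
    "\<forall>j\<le>length ys. 0 \<le> u + sum_list (take j ys) - sum_list (take j xs)
        \<and> u + sum_list (take j ys) - sum_list (take j xs) \<le> b"
    "0 \<le> t" "t \<le> b" "t - u = c - d"
  shows "\<forall>j\<le>length ys. 0 \<le> t + sum_list (take j (g a c d ys)) - sum_list (take j xs)
        \<and> t + sum_list (take j (g a c d ys)) - sum_list (take j xs) \<le> b"
  using assms
proof (induction ys arbitrary: c d xs t u)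
  case Nil
  then show ?case by simp
next
  case (Cons y ys)
  then obtain x xs' where xs: "xs = x # xs'" by (cases xs) auto
  define d' where "d' = d + y"
  define c' where "c' = max c (min (c + a) d')"
  have gy: "g a c d (y#ys) = (c' - c) # g a c' d' ys" by (simp add: d'_def c'_def Let_def)
  have x: "0 \<le> x" "x \<le> a" using Cons.prems(2) xs by auto
  have h1: "0 \<le> u + y - x" "u + y - x \<le> b" using Cons.prems(3)[rule_format, of 1] xs by auto
  define t' where "t' = t + (c' - c) - x"
  define u' where "u' = u + y - x"
  have t': "0 \<le> t'" "t' \<le> b" using h1 x Cons.prems(4-6)
    unfolding t'_def c'_def d'_def by auto
  have IH: "\<forall>j\<le>length ys. 0 \<le> t' + sum_list (take j (g a c' d' ys)) - sum_list (take j xs')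
        \<and> t' + sum_list (take j (g a c' d' ys)) - sum_list (take j xs') \<le> b"
  proof (rule Cons.IH)
    show "length xs' = length ys" using Cons.prems(1) xs by simp
    show "set xs' \<subseteq> {0..a}" using Cons.prems(2) xs by simp
    show "\<forall>j\<le>length ys. 0 \<le> u' + sum_list (take j ys) - sum_list (take j xs')
        \<and> u' + sum_list (take j ys) - sum_list (take j xs') \<le> b"
    proof (intro allI impI)
      fix j assume "j \<le> length ys"
      then show "0 \<le> u' + sum_list (take j ys) - sum_list (take j xs')
        \<and> u' + sum_list (take j ys) - sum_list (take j xs') \<le> b"
        using Cons.prems(3)[rule_format, of "Suc j"] xs unfolding u'_def by auto
    qed
    show "0 \<le> t'" "t' \<le> b" by (fact t')+
    show "t' - u' = c' - d'" using Cons.prems(6) unfolding t'_def u'_def d'_def by simp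
  qed
  show ?case
  proof (intro allI impI)
    fix j assume j: "j \<le> length (y#ys)"
    show "0 \<le> t + sum_list (take j (g a c d (y#ys))) - sum_list (take j xs)
        \<and> t + sum_list (take j (g a c d (y#ys))) - sum_list (take j xs) \<le> b"
    proof (cases j)
      case 0 then show ?thesis using Cons.prems by simp
    next
      case (Suc k)
      then have "k \<le> length ys" using j by simp
      then show ?thesis using IH[rule_format, of k] unfolding gy xs Suc t'_def by simp
    qed
  qed
qed

theorem lemma2:
  fixes \<alpha> \<beta> :: int and n :: nat and Yc Y :: "int set"
  assumes "\<alpha> \<ge> 1" and "\<beta> \<ge> 0" and "n \<ge> 1"
    and "{0..\<alpha>} \<subseteq> Yc" and "Yc \<subseteq> Y"
  shows "\<exists>F :: int list \<Rightarrow> int list.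
           (\<forall>ys. length ys = n \<and> set ys \<subseteq> Y \<longrightarrow> length (F ys) = n \<and> set (F ys) \<subseteq> Yc) \<and>
           (\<forall>s0 xs. s0 \<in> {0..\<beta>} \<and> length xs = n \<and> set xs \<subseteq> {0..\<alpha>} \<longrightarrow>
              (\<forall>ys \<in> feasible_requests \<beta> Y n s0 xs. F ys \<in> feasible_requests \<beta> Yc n s0 xs))"
proof (rule exI[of _ "g \<alpha> 0 0"], rule conjI)
  have a0: "\<alpha> \<ge> 0" using assms(1) by simp
  show "\<forall>ys. length ys = n \<and> set ys \<subseteq> Y \<longrightarrow> length (g \<alpha> 0 0 ys) = n \<and> set (g \<alpha> 0 0 ys) \<subseteq> Yc"
    using g_len g_set[OF a0] assms(4) by blast
next
  show "\<forall>s0 xs. s0 \<in> {0..\<beta>} \<and> length xs = n \<and> set xs \<subseteq> {0..\<alpha>} \<longrightarrow>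
              (\<forall>ys \<in> feasible_requests \<beta> Y n s0 xs. g \<alpha> 0 0 ys \<in> feasible_requests \<beta> Yc n s0 xs)"
  proof (intro allI impI ballI)
  have a0: "\<alpha> \<ge> 0" using assms(1) by simp
  fix s0 xs ys
  assume A: "s0 \<in> {0..\<beta>} \<and> length xs = n \<and> set xs \<subseteq> {0..\<alpha>}"
    and B: "ys \<in> feasible_requests \<beta> Y n s0 xs"
  have L: "length ys = n" using B by (simp add: feasible_requests_def)
  have F: "\<forall>j\<le>length ys. 0 \<le> s0 + sum_list (take j ys) - sum_list (take j xs)
        \<and> s0 + sum_list (take j ys) - sum_list (take j xs) \<le> \<beta>"
    using B L by (simp add: feasible_requests_def battery_state_def)
  have G: "\<forall>j\<le>length ys. 0 \<le> s0 + sum_list (take j (g \<alpha> 0 0 ys)) - sum_list (take j xs)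
        \<and> s0 + sum_list (take j (g \<alpha> 0 0 ys)) - sum_list (take j xs) \<le> \<beta>"
    using g_main[of xs ys \<alpha> s0 \<beta> s0 0 0] A L F by auto
  show "g \<alpha> 0 0 ys \<in> feasible_requests \<beta> Yc n s0 xs"
    using G L g_len g_set[OF a0] assms(4)
    unfolding feasible_requests_def battery_state_def by blast
  qed
qed

end
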